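(* 1. $\sup_{0\le x_1<\ell_\varepsilon}|\mu_\varepsilon(x_1)-\mu_0(x_1)|\to0$ as $\varepsilon\to0^+$. 2. There exist $\varepsilon_0>0$ and positive constants $C_1,C_2,C_3$ depending only on $\alpha,\kappa,\delta$ such that for every $0\le\varepsilon\le\varepsilon_0$ and every $x_1\in[0,\ell_\varepsilon)$: $$|\mu_\varepsilon(x_1)|\le C_1(1+x_1)^{-1/\alpha},\qquad |H_\varepsilon(\mu_\varepsilon(x_1))|\le C_2(1+x_1)^{-1-1/\alpha},\qquad |H_0'(\mu_\varepsilon(x_1))|\le C_3(1+x_1)^{-1}.$$
   Context: Fix $\kappa>0$, $\alpha>0$, $\delta<0$. For $\varepsilon\ge0$ let $H_\varepsilon(s)=\kappa|s|^{1+\alpha}+\varepsilon$, $\rho_\varepsilon(\xi_1)=\int_\delta^{\xi_1}ds/H_\varepsilon(s)$ for $\delta\le\xi_1<0$, $\ell_\varepsilon=\lim_{\xi_1\to0^-}\rho_\varepsilon(\xi_1)$ (finite for $\varepsilon>0$, $\ell_0=+\infty$), and $\mu_\varepsilon:=\rho_\varepsilon^{-1}:[0,\ell_\varepsilon)\to[\delta,0)$. Explicitly $\mu_0(x_1)=-(\alpha\kappa)^{-1/\alpha}(x_1+\hat x_1)^{-1/\alpha}$ with $\hat x_1=(\alpha\kappa)^{-1}|\delta|^{-\alpha}$. *)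

theory Defs
  imports "HOL-Analysis.Analysis"
begin

definition Hfun :: "real \<Rightarrow> real \<Rightarrow> real \<Rightarrow> real \<Rightarrow> real" where
  "Hfun \<kappa> \<alpha> \<epsilon> s = \<kappa> * \<bar>s\<bar> powr (1 + \<alpha>) + \<epsilon>"

definition rho :: "real \<Rightarrow> real \<Rightarrow> real \<Rightarrow> real \<Rightarrow> real \<Rightarrow> real" where
  "rho \<kappa> \<alpha> \<delta> \<epsilon> \<xi> = integral {\<delta>..\<xi>} (\<lambda>s. 1 / Hfun \<kappa> \<alpha> \<epsilon> s)"

text \<open>ell_eps = lim_{xi -> 0^-} rho_eps(xi), as an extended real (equal to +infinity for eps = 0)\<close>
definition ell :: "real \<Rightarrow> real \<Rightarrow> real \<Rightarrow> real \<Rightarrow> ereal" where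
  "ell \<kappa> \<alpha> \<delta> \<epsilon> = Lim (at_left 0) (\<lambda>\<xi>. ereal (rho \<kappa> \<alpha> \<delta> \<epsilon> \<xi>))"

definition mu :: "real \<Rightarrow> real \<Rightarrow> real \<Rightarrow> real \<Rightarrow> real \<Rightarrow> real" where
  "mu \<kappa> \<alpha> \<delta> \<epsilon> x = the_inv_into {\<delta>..<0} (rho \<kappa> \<alpha> \<delta> \<epsilon>) x"

end

theory Submission imports Defs "HOL-Real_Asymp.Real_Asymp" begin

locale P =
  fixes \<kappa> \<alpha> \<delta> :: real
  assumes k: "\<kappa> > 0" and a: "\<alpha> > 0" and d: "\<delta> < 0"
begin

abbreviation "H e \<equiv> Hfun \<kappa> \<alpha> e"
abbreviation "R e \<equiv> rho \<kappa> \<alpha> \<delta> e"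

lemma H_cont: "continuous_on S (H e)"
proof -
  have "continuous_on S (\<lambda>s. \<bar>s\<bar> powr (1 + \<alpha>))"
    by (rule continuous_on_powr') (use a in \<open>auto intro!: continuous_intros\<close>)
  then show ?thesis unfolding Hfun_def by (intro continuous_on_add continuous_on_mult continuous_on_const)
qed

lemma H_pos: "e \<ge> 0 \<Longrightarrow> (s \<noteq> 0 \<or> e > 0) \<Longrightarrow> H e s > 0"
proof -
  assume h: "e \<ge> 0" "s \<noteq> 0 \<or> e > 0"
  have "\<bar>s\<bar> powr (1+\<alpha>) \<ge> 0" by simp
  moreover have "s \<noteq> 0 \<Longrightarrow> \<bar>s\<bar> powr (1+\<alpha>) > 0" by simp
  ultimately show ?thesis unfolding Hfun_def using k h
    by (metis add_nonneg_pos add_pos_nonneg mult_nonneg_nonneg mult_pos_pos less_imp_le)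
qed

lemma H_le: "e \<ge> 0 \<Longrightarrow> \<delta> \<le> s \<Longrightarrow> s \<le> 0 \<Longrightarrow> H e s \<le> \<kappa> * (-\<delta>) powr (1+\<alpha>) + e"
proof -
  assume h: "e \<ge> 0" "\<delta> \<le> s" "s \<le> 0"
  have "\<bar>s\<bar> powr (1+\<alpha>) \<le> (-\<delta>) powr (1+\<alpha>)"
    by (rule powr_mono2) (use a h in auto)
  then show ?thesis unfolding Hfun_def using k by simp
qed

lemma iH_cont: "e \<ge> 0 \<Longrightarrow> (b < 0 \<or> e > 0) \<Longrightarrow> continuous_on {a'..b} (\<lambda>s. 1 / H e s)"
proof -
  assume h: "e \<ge> 0" "b < 0 \<or> e > 0"
  have "\<forall>s\<in>{a'..b}. H e s \<noteq> 0"
  proof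
    fix s assume "s \<in> {a'..b}"
    then have "s \<noteq> 0 \<or> e > 0" using h by auto
    then show "H e s \<noteq> 0" using H_pos[OF h(1)] by (metis less_irrefl)
  qed
  then show ?thesis using continuous_on_divide[OF continuous_on_const H_cont] by blast
qed

lemma iH_int: "e \<ge> 0 \<Longrightarrow> (b < 0 \<or> e > 0) \<Longrightarrow> (\<lambda>s. 1 / H e s) integrable_on {a'..b}"
  by (rule integrable_continuous_interval, rule iH_cont)

lemma R_add: "e \<ge> 0 \<Longrightarrow> (b < 0 \<or> e > 0) \<Longrightarrow> \<delta> \<le> x \<Longrightarrow> x \<le> b \<Longrightarrow>
   R e b = R e x + integral {x..b} (\<lambda>s. 1 / H e s)"
proof -
  assume h: "e \<ge> 0" "b < 0 \<or> e > 0" "\<delta> \<le> x" "x \<le> b"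
  have "integral {\<delta>..x} (\<lambda>s. 1 / H e s) + integral {x..b} (\<lambda>s. 1 / H e s) = integral {\<delta>..b} (\<lambda>s. 1 / H e s)"
    by (rule Henstock_Kurzweil_Integration.integral_combine[OF h(3,4) iH_int[OF h(1,2)]])
  then show ?thesis unfolding rho_def by simp
qed

lemma incr_lb: "e \<ge> 0 \<Longrightarrow> (b < 0 \<or> e > 0) \<Longrightarrow> \<delta> \<le> x \<Longrightarrow> x \<le> b \<Longrightarrow> b \<le> 0 \<Longrightarrow>
   (b - x) / (\<kappa> * (-\<delta>) powr (1+\<alpha>) + e) \<le> integral {x..b} (\<lambda>s. 1 / H e s)"
proof -
  assume h: "e \<ge> 0" "b < 0 \<or> e > 0" "\<delta> \<le> x" "x \<le> b" "b \<le> 0"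
  have "integral {x..b} (\<lambda>s. 1 / (\<kappa> * (-\<delta>) powr (1+\<alpha>) + e)) \<le> integral {x..b} (\<lambda>s. 1 / H e s)"
  proof (rule integral_le[OF integrable_const_ivl iH_int[OF h(1,2)]])
    fix s assume s: "s \<in> {x..b}"
    have "s \<noteq> 0 \<or> e > 0" using s h by auto
    then have "0 < H e s" using H_pos h by auto
    moreover have "H e s \<le> \<kappa> * (-\<delta>) powr (1+\<alpha>) + e" using H_le h s by auto
    ultimately show "1 / (\<kappa> * (-\<delta>) powr (1+\<alpha>) + e) \<le> 1 / H e s"
      by (simp add: frac_le)
  qed
  then show ?thesis using h by (simp add: content_real)
qed

lemma M_pos: "e \<ge> 0 \<Longrightarrow> \<kappa> * (-\<delta>) powr (1+\<alpha>) + e > 0"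
  using k d by (simp add: add_pos_nonneg)

lemma R_mono: "e \<ge> 0 \<Longrightarrow> (y < 0 \<or> e > 0) \<Longrightarrow> \<delta> \<le> x \<Longrightarrow> x < y \<Longrightarrow> y \<le> 0 \<Longrightarrow> R e x < R e y"
proof -
  assume h: "e \<ge> 0" "y < 0 \<or> e > 0" "\<delta> \<le> x" "x < y" "y \<le> 0"
  have "0 < (y - x) / (\<kappa> * (-\<delta>) powr (1+\<alpha>) + e)" using M_pos[OF h(1)] h by simp
  also have "\<dots> \<le> integral {x..y} (\<lambda>s. 1 / H e s)" using incr_lb[of e y x] h by auto
  finally show ?thesis using R_add[of e y x] h by auto
qed

lemma R_delta: "R e \<delta> = 0" unfolding rho_def by simp

lemma R_cont: "e \<ge> 0 \<Longrightarrow> (b < 0 \<or> e > 0) \<Longrightarrow> continuous_on {\<delta>..b} (R e)"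
proof -
  assume h: "e \<ge> 0" "b < 0 \<or> e > 0"
  show ?thesis unfolding rho_def
    by (rule indefinite_integral_continuous_1[OF iH_int[OF h]])
qed

definition "F s = (-s) powr (-\<alpha>) / (\<alpha>*\<kappa>)"

lemma F_deriv: "s < 0 \<Longrightarrow> (F has_real_derivative 1 / H 0 s) (at s)"
proof -
  assume s: "s < 0"
  have d1: "((\<lambda>z. z powr (-\<alpha>)) has_real_derivative (-\<alpha>) * (-s) powr (-\<alpha> - 1)) (at (-s))"
    using has_real_derivative_powr[of "-s" "-\<alpha>"] s by simp
  have d2: "((\<lambda>s. - s) has_real_derivative -1) (at s)"
    by (rule derivative_eq_intros refl | simp)+
  have d3: "((\<lambda>s. (-s) powr (-\<alpha>)) has_real_derivative (-\<alpha>) * (-s) powr (-\<alpha> - 1) * (-1)) (at s)"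
    using DERIV_chain2[OF d1 d2] by simp
  have d4: "(F has_real_derivative (-\<alpha>) * (-s) powr (-\<alpha> - 1) * (-1) / (\<alpha>*\<kappa>)) (at s)"
    unfolding F_def by (rule DERIV_cdivide[OF d3])
  have e: "-\<alpha> - 1 = -(1+\<alpha>)" by simp
  have "(-\<alpha>) * (-s) powr (-\<alpha> - 1) * (-1) / (\<alpha>*\<kappa>) = (-s) powr (-(1+\<alpha>)) / \<kappa>"
    unfolding e using a k by (simp add: field_simps)
  also have "\<dots> = 1 / H 0 s"
    unfolding Hfun_def powr_minus_divide using s by simp
  finally show ?thesis using d4 by simp
qed

lemma R0: "\<delta> \<le> x \<Longrightarrow> x < 0 \<Longrightarrow> R 0 x = F x - F \<delta>"
proof -
  assume h: "\<delta> \<le> x" "x < 0"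
  have "((\<lambda>s. 1 / H 0 s) has_integral (F x - F \<delta>)) {\<delta>..x}"
  proof (rule fundamental_theorem_of_calculus[OF h(1)])
    fix s assume "s \<in> {\<delta>..x}"
    then have "s < 0" using h by auto
    then show "(F has_vector_derivative 1 / H 0 s) (at s within {\<delta>..x})"
      using F_deriv has_real_derivative_iff_has_vector_derivative has_vector_derivative_at_within by blast
  qed
  then show ?thesis unfolding rho_def by (rule integral_unique)
qed

lemma ell_pos: "e > 0 \<Longrightarrow> ell \<kappa> \<alpha> \<delta> e = ereal (R e 0)"
proof -
  assume e: "e > 0"
  have "continuous_on {\<delta>..0} (R e)" using R_cont[of e 0] e by simp
  then have "(R e \<longlongrightarrow> R e 0) (at 0 within {\<delta>..0})"
    using d by (simp add: continuous_on_def)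
  then have "(R e \<longlongrightarrow> R e 0) (at_left 0)" using at_within_Icc_at_left[of \<delta> 0] d by simp
  then have "((\<lambda>x. ereal (R e x)) \<longlongrightarrow> ereal (R e 0)) (at_left 0)" by simp
  then show ?thesis unfolding ell_def by (intro tendsto_Lim) simp_all
qed

lemma F_lim: "filterlim (\<lambda>x. (-x) powr (-\<alpha>) / (\<alpha>*\<kappa>) - c) at_top (at_left (0::real))"
  using a k by real_asymp

lemma ell_zero: "ell \<kappa> \<alpha> \<delta> 0 = \<infinity>"
proof -
  have ev: "eventually (\<lambda>x. F x - F \<delta> = R 0 x) (at_left 0)"
    using eventually_at_left_real[OF d] by eventually_elim (use R0 in auto)
  have "filterlim (\<lambda>x. F x - F \<delta>) at_top (at_left (0::real))"
    using F_lim[of "F \<delta>"] unfolding F_def by simp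
  then have "filterlim (R 0) at_top (at_left (0::real))"
    using filterlim_cong[OF refl refl ev] by simp
  then have "((\<lambda>x. ereal (R 0 x)) \<longlongrightarrow> \<infinity>) (at_left 0)"
    by (simp add: tendsto_PInfty_eq_at_top)
  then show ?thesis unfolding ell_def by (intro tendsto_Lim) simp_all
qed

lemma R_inj: "e \<ge> 0 \<Longrightarrow> inj_on (R e) {\<delta>..<0}"
proof (rule inj_onI)
  fix x y assume h: "e \<ge> 0" "x \<in> {\<delta>..<0}" "y \<in> {\<delta>..<0}" "R e x = R e y"
  show "x = y"
  proof (rule ccontr)
    assume "x \<noteq> y"
    then have "x < y \<or> y < x" by auto
    then show False using R_mono[of e y x] R_mono[of e x y] h by auto
  qed
qed

definition "mu0 x = -((\<alpha>*\<kappa>*x + (-\<delta>) powr (-\<alpha>)) powr (-1/\<alpha>))"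

lemma mu0_props: "0 \<le> x \<Longrightarrow> \<delta> \<le> mu0 x \<and> mu0 x < 0 \<and> R 0 (mu0 x) = x"
proof -
  assume x: "0 \<le> x"
  define c where "c = \<alpha>*\<kappa>*x + (-\<delta>) powr (-\<alpha>)"
  have c0: "(-\<delta>) powr (-\<alpha>) > 0" using d by simp
  have cge: "c \<ge> (-\<delta>) powr (-\<alpha>)" unfolding c_def using a k x by simp
  have cpos: "c > 0" using c0 cge by linarith
  have m: "mu0 x = - (c powr (-1/\<alpha>))" unfolding mu0_def c_def by simp
  have neg: "mu0 x < 0" using cpos m by simp
  have "c powr (-1/\<alpha>) \<le> ((-\<delta>) powr (-\<alpha>)) powr (-1/\<alpha>)"
    by (rule powr_mono2') (use a c0 cge in auto)
  also have "\<dots> = -\<delta>" using a d by (simp add: powr_powr)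
  finally have ge: "\<delta> \<le> mu0 x" using m by simp
  have "F (mu0 x) = (c powr (-1/\<alpha>)) powr (-\<alpha>) / (\<alpha>*\<kappa>)" unfolding F_def m by simp
  also have "\<dots> = c / (\<alpha>*\<kappa>)" using a cpos by (simp add: powr_powr)
  also have "\<dots> = x + F \<delta>" unfolding c_def F_def using a k by (simp add: field_simps)
  finally have "R 0 (mu0 x) = x" using R0[OF ge neg] by simp
  then show ?thesis using ge neg by simp
qed

lemma mu_props: "e \<ge> 0 \<Longrightarrow> 0 \<le> x \<Longrightarrow> ereal x < ell \<kappa> \<alpha> \<delta> e \<Longrightarrow>
   \<delta> \<le> mu \<kappa> \<alpha> \<delta> e x \<and> mu \<kappa> \<alpha> \<delta> e x < 0 \<and> R e (mu \<kappa> \<alpha> \<delta> e x) = x"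
proof -
  assume h: "e \<ge> 0" "0 \<le> x" "ereal x < ell \<kappa> \<alpha> \<delta> e"
  have "\<exists>\<xi>. \<delta> \<le> \<xi> \<and> \<xi> < 0 \<and> R e \<xi> = x"
  proof (cases "e = 0")
    case True
    then show ?thesis using mu0_props[OF h(2)] by blast
  next
    case False
    then have e: "e > 0" using h by simp
    then have xl: "x < R e 0" using ell_pos h by simp
    have "\<exists>\<xi>. \<delta> \<le> \<xi> \<and> \<xi> \<le> 0 \<and> R e \<xi> = x"
      by (rule IVT') (use R_delta h xl d R_cont[of e 0] e in auto)
    then obtain \<xi> where "\<delta> \<le> \<xi>" "\<xi> \<le> 0" "R e \<xi> = x" by blast
    moreover have "\<xi> \<noteq> 0" using xl calculation by auto
    ultimately show ?thesis by auto
  qed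
  then have "x \<in> R e ` {\<delta>..<0}" by auto
  then show ?thesis unfolding mu_def
    using f_the_inv_into_f[OF R_inj[OF h(1)]] the_inv_into_into[OF R_inj[OF h(1)], of x "{\<delta>..<0}"]
    by auto
qed

lemma mu_zero: "0 \<le> x \<Longrightarrow> mu \<kappa> \<alpha> \<delta> 0 x = mu0 x"
  unfolding mu_def using mu0_props[of x] the_inv_into_f_f[OF R_inj[of 0], of "mu0 x"] by auto

lemma R_le: "e \<ge> 0 \<Longrightarrow> \<delta> \<le> x \<Longrightarrow> x < 0 \<Longrightarrow> R e x \<le> R 0 x"
  unfolding rho_def
proof (rule integral_le[OF iH_int iH_int])
  fix s assume h: "e \<ge> 0" "x < 0" "s \<in> {\<delta>..x}"
  have "0 < H 0 s" using H_pos[of 0 s] h by auto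
  moreover have "H 0 s \<le> H e s" unfolding Hfun_def using h by simp
  ultimately show "1 / H e s \<le> 1 / H 0 s" by (simp add: frac_le)
qed auto

lemma mu_ge: "e \<ge> 0 \<Longrightarrow> 0 \<le> x \<Longrightarrow> ereal x < ell \<kappa> \<alpha> \<delta> e \<Longrightarrow> mu0 x \<le> mu \<kappa> \<alpha> \<delta> e x"
proof (rule ccontr)
  assume h: "e \<ge> 0" "0 \<le> x" "ereal x < ell \<kappa> \<alpha> \<delta> e" "\<not> mu0 x \<le> mu \<kappa> \<alpha> \<delta> e x"
  note m = mu_props[OF h(1-3)] and m0 = mu0_props[OF h(2)]
  have "R e (mu \<kappa> \<alpha> \<delta> e x) < R e (mu0 x)"
    by (rule R_mono[OF h(1)]) (use m m0 h(4) in auto)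
  also have "\<dots> \<le> R 0 (mu0 x)" using R_le[of e "mu0 x"] h m0 by linarith
  finally show False using m m0 by simp
qed

definition "C1 = (min (\<alpha>*\<kappa>) ((-\<delta>) powr (-\<alpha>))) powr (-1/\<alpha>)"

lemma C1_pos: "C1 > 0"
proof -
  have "min (\<alpha>*\<kappa>) ((-\<delta>) powr (-\<alpha>)) > 0" using a k d by simp
  then have "min (\<alpha>*\<kappa>) ((-\<delta>) powr (-\<alpha>)) \<noteq> 0" by linarith
  then show ?thesis unfolding C1_def powr_gt_zero .
qed

lemma mu0_bound: "0 \<le> x \<Longrightarrow> - mu0 x \<le> C1 * (1+x) powr (-1/\<alpha>)"
proof -
  assume x: "0 \<le> x"
  define m where "m = min (\<alpha>*\<kappa>) ((-\<delta>) powr (-\<alpha>))"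
  define c where "c = \<alpha>*\<kappa>*x + (-\<delta>) powr (-\<alpha>)"
  have mpos: "m > 0" unfolding m_def using a k d by simp
  have "m * (1+x) = m + m * x" by (simp add: algebra_simps)
  also have "\<dots> \<le> (-\<delta>) powr (-\<alpha>) + \<alpha>*\<kappa>*x"
    by (intro add_mono mult_right_mono) (use x in \<open>auto simp: m_def\<close>)
  finally have cge: "m * (1+x) \<le> c" unfolding c_def by simp
  have "c powr (-1/\<alpha>) \<le> (m * (1+x)) powr (-1/\<alpha>)"
    by (rule powr_mono2') (use a mpos x cge in auto)
  also have "\<dots> = C1 * (1+x) powr (-1/\<alpha>)"
    unfolding C1_def m_def[symmetric] using mpos x by (simp add: powr_mult)
  finally show ?thesis unfolding mu0_def c_def[symmetric] by simp
qed

lemma Hderiv: "s < 0 \<Longrightarrow> deriv (H 0) s = - (\<kappa> * ((1+\<alpha>) * (-s) powr \<alpha>))"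
proof -
  assume s: "s < 0"
  have d1: "((\<lambda>z. z powr (1+\<alpha>)) has_real_derivative (1+\<alpha>) * (-s) powr (1+\<alpha> - 1)) (at (-s))"
    using has_real_derivative_powr[of "-s" "1+\<alpha>"] s by simp
  have d2: "((\<lambda>s. - s) has_real_derivative -1) (at s)"
    by (rule derivative_eq_intros refl | simp)+
  have d3: "((\<lambda>s. (-s) powr (1+\<alpha>)) has_real_derivative (1+\<alpha>) * (-s) powr \<alpha> * (-1)) (at s)"
    using DERIV_chain2[OF d1 d2] by simp
  have d4: "((\<lambda>s. \<kappa> * (-s) powr (1+\<alpha>) + 0) has_real_derivative - (\<kappa> * ((1+\<alpha>) * (-s) powr \<alpha>))) (at s)"
    using DERIV_add[OF DERIV_cmult[OF d3, of \<kappa>] DERIV_const[of 0]] by simp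
  have d5: "(H 0 has_real_derivative - (\<kappa> * ((1+\<alpha>) * (-s) powr \<alpha>))) (at s)"
    by (rule has_field_derivative_transform_within_open[OF d4, of "{..<0}"])
       (use s in \<open>auto simp: Hfun_def\<close>)
  then show ?thesis by (rule DERIV_imp_deriv)
qed

definition "B = 1 + 1/(\<alpha>*\<kappa>)"

lemma ell_bound: "0 < e \<Longrightarrow> e \<le> (-\<delta>) powr (1+\<alpha>) \<Longrightarrow> R e 0 \<le> B * e powr (-\<alpha>/(1+\<alpha>))"
proof -
  assume e: "0 < e" "e \<le> (-\<delta>) powr (1+\<alpha>)"
  define t where "t = e powr (1/(1+\<alpha>))"
  have tpos: "t > 0" unfolding t_def using e by simp
  have "t \<le> ((-\<delta>) powr (1+\<alpha>)) powr (1/(1+\<alpha>))"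
    unfolding t_def by (rule powr_mono2) (use e a in auto)
  also have "\<dots> = -\<delta>" using a d by (simp add: powr_powr)
  finally have tle: "\<delta> \<le> -t" by simp
  have split: "R e 0 = R e (-t) + integral {-t..0} (\<lambda>s. 1 / H e s)"
    using R_add[of e 0 "-t"] e tle tpos by simp
  have "R e (-t) \<le> R 0 (-t)" using R_le[of e "-t"] e tle tpos by simp
  also have "\<dots> = F (-t) - F \<delta>" using R0 tle tpos by simp
  also have "\<dots> \<le> F (-t)" unfolding F_def using a k d by simp
  also have "\<dots> = t powr (-\<alpha>) / (\<alpha>*\<kappa>)" unfolding F_def by simp
  also have "t powr (-\<alpha>) = e powr (-\<alpha>/(1+\<alpha>))" unfolding t_def using e by (simp add: powr_powr)
  finally have i1: "R e (-t) \<le> e powr (-\<alpha>/(1+\<alpha>)) / (\<alpha>*\<kappa>)" .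
  have "integral {-t..0} (\<lambda>s. 1 / H e s) \<le> integral {-t..0} (\<lambda>s. 1 / e)"
  proof (rule integral_le[OF iH_int integrable_const_ivl])
    fix s assume "s \<in> {-t..0}"
    have "e \<le> H e s" unfolding Hfun_def using k by simp
    then show "1 / H e s \<le> 1 / e" using e by (simp add: frac_le)
  qed (use e in auto)
  also have "\<dots> = t / e" using tpos by (simp add: content_real)
  also have "\<dots> = e powr (-\<alpha>/(1+\<alpha>))"
  proof -
    have "t / e = e powr (1/(1+\<alpha>)) / e powr 1" unfolding t_def using e by simp
    also have "\<dots> = e powr (1/(1+\<alpha>) - 1)" by (rule powr_diff[symmetric])
    also have "1/(1+\<alpha>) - 1 = -\<alpha>/(1+\<alpha>)" using a by (simp add: field_simps)
    finally show ?thesis .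
  qed
  finally have i2: "integral {-t..0} (\<lambda>s. 1 / H e s) \<le> e powr (-\<alpha>/(1+\<alpha>))" .
  show ?thesis using split i1 i2 unfolding B_def by (simp add: algebra_simps add_divide_distrib)
qed

lemma eps_bound: "0 < e \<Longrightarrow> e \<le> 1 \<Longrightarrow> e \<le> (-\<delta>) powr (1+\<alpha>) \<Longrightarrow> 0 \<le> x \<Longrightarrow> x < R e 0 \<Longrightarrow>
  e \<le> (1+B) powr (1+1/\<alpha>) * (1+x) powr (-1-1/\<alpha>)"
proof -
  assume e: "0 < e" "e \<le> 1" "e \<le> (-\<delta>) powr (1+\<alpha>)" and x: "0 \<le> x" "x < R e 0"
  have Bpos: "B > 0" unfolding B_def using a k by (simp add: add_pos_pos)
  define p where "p = e powr (-\<alpha>/(1+\<alpha>))"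
  have p1: "1 \<le> p"
  proof -
    have q: "e powr (\<alpha>/(1+\<alpha>)) \<le> 1" by (rule powr_le1) (use e a in auto)
    have "0 < e powr (\<alpha>/(1+\<alpha>))" using e by simp
    moreover have "p = 1 / e powr (\<alpha>/(1+\<alpha>))" unfolding p_def
      using powr_minus_divide[of e "\<alpha>/(1+\<alpha>)"] by simp
    ultimately show ?thesis using q by simp
  qed
  have "1 + x \<le> 1 + B * p" using ell_bound[OF e(1,3)] x unfolding p_def by simp
  also have "\<dots> \<le> (1 + B) * p" using p1 by (simp add: algebra_simps)
  finally have le: "1 + x \<le> (1+B) * p" .
  have "((1+B) * p) powr (-1-1/\<alpha>) \<le> (1+x) powr (-1-1/\<alpha>)"
    by (rule powr_mono2') (use a x le in \<open>auto simp: field_simps\<close>)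
  moreover have "((1+B) * p) powr (-1-1/\<alpha>) = (1+B) powr (-1-1/\<alpha>) * e"
  proof -
    have "((1+B) * p) powr (-1-1/\<alpha>) = (1+B) powr (-1-1/\<alpha>) * p powr (-1-1/\<alpha>)"
      using Bpos p1 by (simp add: powr_mult)
    moreover have "p powr (-1-1/\<alpha>) = e powr ((-\<alpha>/(1+\<alpha>)) * (-1-1/\<alpha>))" unfolding p_def by (simp add: powr_powr)
    moreover have "(-\<alpha>/(1+\<alpha>)) * (-1-1/\<alpha>) = 1"
    proof -
      have "-1-1/\<alpha> = -(1+\<alpha>)/\<alpha>" using a by (simp add: field_simps)
      moreover have "(- 1 - \<alpha>) / (1 + \<alpha>) = - 1"
        using a by (simp add: divide_eq_eq)
      ultimately show ?thesis using a by simp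
    qed
    ultimately show ?thesis using e by simp
  qed
  ultimately have "(1+B) powr (-1-1/\<alpha>) * e \<le> (1+x) powr (-1-1/\<alpha>)" by simp
  then have "(1+B) powr (1+1/\<alpha>) * ((1+B) powr (-1-1/\<alpha>) * e) \<le> (1+B) powr (1+1/\<alpha>) * (1+x) powr (-1-1/\<alpha>)"
    by (simp add: mult_left_mono)
  moreover have "(1+B) powr (1+1/\<alpha>) * (1+B) powr (-1-1/\<alpha>) = 1"
    using Bpos by (simp add: powr_add[symmetric])
  ultimately show ?thesis by (simp add: mult.assoc[symmetric])
qed

lemma exps: "(-1/\<alpha>) * (1+\<alpha>) = -1-1/\<alpha>" "(-1/\<alpha>) * \<alpha> = -1"
  using a by (simp_all add: field_simps)

lemma part2: "\<exists>\<epsilon>0 > 0. \<exists>C1 > 0. \<exists>C2 > 0. \<exists>C3 > 0.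
         \<forall>\<epsilon> x1. 0 \<le> \<epsilon> \<and> \<epsilon> \<le> \<epsilon>0 \<and> 0 \<le> x1 \<and> ereal x1 < ell \<kappa> \<alpha> \<delta> \<epsilon> \<longrightarrow>
           \<bar>mu \<kappa> \<alpha> \<delta> \<epsilon> x1\<bar> \<le> C1 * (1 + x1) powr (- 1 / \<alpha>) \<and>
           \<bar>Hfun \<kappa> \<alpha> \<epsilon> (mu \<kappa> \<alpha> \<delta> \<epsilon> x1)\<bar> \<le> C2 * (1 + x1) powr (- 1 - 1 / \<alpha>) \<and>
           \<bar>deriv (Hfun \<kappa> \<alpha> 0) (mu \<kappa> \<alpha> \<delta> \<epsilon> x1)\<bar> \<le> C3 * (1 + x1) powr (- 1)"
proof (intro exI conjI allI impI)
  let ?e0 = "min 1 ((-\<delta>) powr (1+\<alpha>))"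
  let ?C2 = "\<kappa> * C1 powr (1+\<alpha>) + (1+B) powr (1+1/\<alpha>)"
  let ?C3 = "\<kappa> * (1+\<alpha>) * C1 powr \<alpha>"
  show "?e0 > 0" using d by simp
  show "C1 > 0" by (rule C1_pos)
  show "?C2 > 0"
  proof -
    have "B > 0" unfolding B_def using a k by (simp add: add_pos_pos)
    then have "(1+B) powr (1+1/\<alpha>) > 0" by simp
    moreover have "\<kappa> * C1 powr (1+\<alpha>) > 0" using k C1_pos by simp
    ultimately show ?thesis by (rule add_pos_pos[rotated])
  qed
  show "?C3 > 0" using k a C1_pos by simp
  fix e x assume h: "0 \<le> e \<and> e \<le> ?e0 \<and> 0 \<le> x \<and> ereal x < ell \<kappa> \<alpha> \<delta> e"
  then have e: "0 \<le> e" "e \<le> 1" "e \<le> (-\<delta>) powr (1+\<alpha>)" and x: "0 \<le> x" "ereal x < ell \<kappa> \<alpha> \<delta> e" by auto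
  define m where "m = mu \<kappa> \<alpha> \<delta> e x"
  have m: "\<delta> \<le> m" "m < 0" "mu0 x \<le> m" using mu_props[OF e(1) x] mu_ge[OF e(1) x] unfolding m_def by auto
  define y where "y = (1+x) powr (-1/\<alpha>)"
  have ypos: "y > 0" unfolding y_def using x by simp
  have am: "\<bar>m\<bar> \<le> C1 * y" using mu0_bound[OF x(1)] m unfolding y_def by simp
  then show "\<bar>mu \<kappa> \<alpha> \<delta> e x\<bar> \<le> C1 * (1 + x) powr (- 1 / \<alpha>)" unfolding m_def y_def by simp
  have p1: "\<bar>m\<bar> powr (1+\<alpha>) \<le> C1 powr (1+\<alpha>) * (1+x) powr (-1-1/\<alpha>)"
  proof -
    have "\<bar>m\<bar> powr (1+\<alpha>) \<le> (C1 * y) powr (1+\<alpha>)" by (rule powr_mono2) (use a am in auto)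
    also have "\<dots> = C1 powr (1+\<alpha>) * y powr (1+\<alpha>)" using C1_pos ypos by (simp add: powr_mult)
    also have "y powr (1+\<alpha>) = (1+x) powr (-1-1/\<alpha>)" unfolding y_def by (simp only: powr_powr exps)
    finally show ?thesis .
  qed
  have p2: "\<bar>m\<bar> powr \<alpha> \<le> C1 powr \<alpha> * (1+x) powr (-1)"
  proof -
    have "\<bar>m\<bar> powr \<alpha> \<le> (C1 * y) powr \<alpha>" by (rule powr_mono2) (use a am in auto)
    also have "\<dots> = C1 powr \<alpha> * y powr \<alpha>" using C1_pos ypos by (simp add: powr_mult)
    also have "y powr \<alpha> = (1+x) powr (-1)" unfolding y_def by (simp only: powr_powr exps)
    finally show ?thesis .
  qed
  have eb: "e \<le> (1+B) powr (1+1/\<alpha>) * (1+x) powr (-1-1/\<alpha>)"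
  proof (cases "e = 0")
    case True then show ?thesis by simp
  next
    case False
    then have "e > 0" using e by simp
    then show ?thesis using eps_bound[of e x] e x ell_pos by simp
  qed
  have "\<bar>H e m\<bar> = \<kappa> * \<bar>m\<bar> powr (1+\<alpha>) + e" unfolding Hfun_def using k e by simp
  also have "\<dots> \<le> \<kappa> * (C1 powr (1+\<alpha>) * (1+x) powr (-1-1/\<alpha>)) + (1+B) powr (1+1/\<alpha>) * (1+x) powr (-1-1/\<alpha>)"
    using p1 eb k by (intro add_mono mult_left_mono) auto
  also have "\<dots> = ?C2 * (1+x) powr (-1-1/\<alpha>)" by (simp add: algebra_simps)
  finally show "\<bar>H e (mu \<kappa> \<alpha> \<delta> e x)\<bar> \<le> ?C2 * (1 + x) powr (- 1 - 1 / \<alpha>)" unfolding m_def .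
  have "\<bar>deriv (H 0) m\<bar> = \<kappa> * (1+\<alpha>) * \<bar>m\<bar> powr \<alpha>" using Hderiv[OF m(2)] k a m(2) by simp
  also have "\<dots> \<le> \<kappa> * (1+\<alpha>) * (C1 powr \<alpha> * (1+x) powr (-1))"
    using p2 k a by (intro mult_left_mono) auto
  finally show "\<bar>deriv (H 0) (mu \<kappa> \<alpha> \<delta> e x)\<bar> \<le> ?C3 * (1 + x) powr (- 1)" unfolding m_def by (simp add: mult.assoc)
qed

lemma R_diff: "0 < \<eta> \<Longrightarrow> 0 \<le> e \<Longrightarrow> \<delta> \<le> y \<Longrightarrow> y \<le> -\<eta> \<Longrightarrow>
   R 0 y - R e y \<le> e * (-\<delta>) / (\<kappa> * \<eta> powr (1+\<alpha>))^2"
proof -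
  assume h: "0 < \<eta>" "0 \<le> e" "\<delta> \<le> y" "y \<le> -\<eta>"
  define q where "q = \<kappa> * \<eta> powr (1+\<alpha>)"
  have qpos: "q > 0" unfolding q_def using k h by simp
  have yneg: "y < 0" using h by simp
  have i0: "(\<lambda>s. 1 / H 0 s) integrable_on {\<delta>..y}" using iH_int[of 0 y] yneg by simp
  have ie: "(\<lambda>s. 1 / H e s) integrable_on {\<delta>..y}" using iH_int[of e y] yneg h by simp
  have "R 0 y - R e y = integral {\<delta>..y} (\<lambda>s. 1 / H 0 s - 1 / H e s)"
    unfolding rho_def using integral_diff[OF i0 ie] by simp
  also have "\<dots> \<le> integral {\<delta>..y} (\<lambda>s. e / (q*q))"
  proof (rule integral_le)
    show "(\<lambda>s. 1 / H 0 s - 1 / H e s) integrable_on {\<delta>..y}"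
      using integrable_diff[OF i0 ie] by simp
    show "(\<lambda>s. e / (q*q)) integrable_on {\<delta>..y}" by (rule integrable_const_ivl)
    fix s assume s: "s \<in> {\<delta>..y}"
    have "\<eta> powr (1+\<alpha>) \<le> \<bar>s\<bar> powr (1+\<alpha>)" by (rule powr_mono2) (use a h s in auto)
    then have qa: "q \<le> H 0 s" unfolding q_def Hfun_def using k by simp
    have he: "H e s = H 0 s + e" unfolding Hfun_def by simp
    have "1 / H 0 s - 1 / H e s = e / (H 0 s * H e s)"
      using qpos qa h unfolding he by (simp add: field_simps)
    also have "\<dots> \<le> e / (q*q)"
      by (rule divide_left_mono) (use qpos qa h he in \<open>auto intro!: mult_mono mult_pos_pos\<close>)
    finally show "1 / H 0 s - 1 / H e s \<le> e / (q*q)" .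
  qed
  also have "\<dots> = (y - \<delta>) * (e / (q*q))" using h by (simp add: content_real)
  also have "\<dots> \<le> (-\<delta>) * (e / (q*q))"
    by (rule mult_right_mono) (use h qpos in auto)
  finally show ?thesis unfolding q_def by (simp add: power2_eq_square mult.commute)
qed

lemma close: "0 < \<eta> \<Longrightarrow> \<exists>\<epsilon>1>0. \<forall>e x. 0 < e \<and> e < \<epsilon>1 \<and> 0 \<le> x \<and> ereal x < ell \<kappa> \<alpha> \<delta> e \<longrightarrow>
   \<bar>mu \<kappa> \<alpha> \<delta> e x - mu \<kappa> \<alpha> \<delta> 0 x\<bar> \<le> 2*\<eta>"
proof -
  assume eta: "0 < \<eta>"
  define K where "K = (-\<delta>) / (\<kappa> * \<eta> powr (1+\<alpha>))^2"
  define M where "M = \<kappa> * (-\<delta>) powr (1+\<alpha>)"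
  have Kpos: "K > 0"
  proof -
    have "(\<kappa> * \<eta> powr (1+\<alpha>))^2 > 0" using k eta by simp
    moreover have "-\<delta> > 0" using d by simp
    ultimately show ?thesis unfolding K_def by (simp only: divide_pos_pos)
  qed
  have Mpos: "M > 0" unfolding M_def using k d by simp
  define e1 where "e1 = min 1 (\<eta> / ((M+1)*K))"
  have e1pos: "e1 > 0" unfolding e1_def using eta Kpos Mpos by simp
  show ?thesis
  proof (intro exI[of _ e1] conjI allI impI e1pos)
    fix e x assume h: "0 < e \<and> e < e1 \<and> 0 \<le> x \<and> ereal x < ell \<kappa> \<alpha> \<delta> e"
    then have e: "0 < e" "e < 1" "e < \<eta> / ((M+1)*K)" and x: "0 \<le> x" "ereal x < ell \<kappa> \<alpha> \<delta> e"
      unfolding e1_def by auto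
    note m = mu_props[OF less_imp_le[OF e(1)] x] and mg = mu_ge[OF less_imp_le[OF e(1)] x]
    note m0 = mu0_props[OF x(1)]
    have mz: "mu \<kappa> \<alpha> \<delta> 0 x = mu0 x" by (rule mu_zero[OF x(1)])
    show "\<bar>mu \<kappa> \<alpha> \<delta> e x - mu \<kappa> \<alpha> \<delta> 0 x\<bar> \<le> 2*\<eta>"
    proof (cases "mu0 x \<ge> -2*\<eta>")
      case True
      then show ?thesis using m mg mz by simp
    next
      case False
      define \<xi> where "\<xi> = mu0 x + \<eta>"
      have xi: "\<delta> \<le> \<xi>" "\<xi> < -\<eta>" "\<xi> < 0" unfolding \<xi>_def using False m0 eta by auto
      have "R e \<xi> = R e (mu0 x) + integral {mu0 x..\<xi>} (\<lambda>s. 1 / H e s)"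
        by (rule R_add) (use e xi m0 eta in \<open>auto simp: \<xi>_def\<close>)
      moreover have "\<eta> / (M + e) \<le> integral {mu0 x..\<xi>} (\<lambda>s. 1 / H e s)"
        using incr_lb[of e \<xi> "mu0 x"] e xi m0 eta unfolding M_def \<xi>_def by simp
      moreover have "\<eta> / (M + 1) \<le> \<eta> / (M + e)"
        by (rule divide_left_mono) (use eta e Mpos in auto)
      moreover have "R 0 (mu0 x) - R e (mu0 x) \<le> e * K"
        using R_diff[of \<eta> e "mu0 x"] eta e m0 False unfolding K_def by simp
      moreover have "e * K < \<eta> / (M + 1)"
      proof -
        have p: "(M+1)*K > 0" using Kpos Mpos by simp
        have "e * ((M+1)*K) < \<eta>" using e(3) p by (simp add: less_divide_eq)
        then have "(e * K) * (M+1) < \<eta>" by (simp add: ac_simps)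
        then show ?thesis using Mpos by (simp add: less_divide_eq)
      qed
      ultimately have "x < R e \<xi>" using m0 by linarith
      then have "mu \<kappa> \<alpha> \<delta> e x < \<xi>"
      proof (rule contrapos_pp)
        assume n: "\<not> mu \<kappa> \<alpha> \<delta> e x < \<xi>"
        show "\<not> x < R e \<xi>"
        proof (cases "\<xi> = mu \<kappa> \<alpha> \<delta> e x")
          case True then show ?thesis using m by simp
        next
          case False
          then have "R e \<xi> < R e (mu \<kappa> \<alpha> \<delta> e x)"
            by (intro R_mono) (use n m e xi in auto)
          then show ?thesis using m by simp
        qed
      qed
      then show ?thesis using mg mz eta unfolding \<xi>_def by simp
    qed
  qed
qed

lemma ell_ge0: "e > 0 \<Longrightarrow> ereal 0 < ell \<kappa> \<alpha> \<delta> e"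
proof -
  assume e: "e > 0"
  have "R e \<delta> < R e 0" by (rule R_mono) (use e d in auto)
  then show ?thesis using ell_pos[OF e] R_delta by simp
qed

lemma part1: "((\<lambda>\<epsilon>. SUP x1 \<in> {x1. 0 \<le> x1 \<and> ereal x1 < ell \<kappa> \<alpha> \<delta> \<epsilon>}.
             \<bar>mu \<kappa> \<alpha> \<delta> \<epsilon> x1 - mu \<kappa> \<alpha> \<delta> 0 x1\<bar>) \<longlongrightarrow> 0) (at_right 0)"
proof (rule tendstoI)
  fix r :: real assume r: "r > 0"
  have "r/3 > 0" using r by simp
  from close[OF this] obtain e1 where e1: "e1 > 0" and cl: "\<forall>e x. 0 < e \<and> e < e1 \<and> 0 \<le> x \<and> ereal x < ell \<kappa> \<alpha> \<delta> e \<longrightarrow>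
     \<bar>mu \<kappa> \<alpha> \<delta> e x - mu \<kappa> \<alpha> \<delta> 0 x\<bar> \<le> 2*(r/3)"
    by blast
  show "eventually (\<lambda>e. dist (SUP x1 \<in> {x1. 0 \<le> x1 \<and> ereal x1 < ell \<kappa> \<alpha> \<delta> e}.
             \<bar>mu \<kappa> \<alpha> \<delta> e x1 - mu \<kappa> \<alpha> \<delta> 0 x1\<bar>) 0 < r) (at_right 0)"
    using eventually_at_right_real[OF e1]
  proof eventually_elim
    case (elim e)
    then have e: "0 < e" "e < e1" by auto
    let ?S = "{x1. 0 \<le> x1 \<and> ereal x1 < ell \<kappa> \<alpha> \<delta> e}"
    let ?f = "\<lambda>x1. \<bar>mu \<kappa> \<alpha> \<delta> e x1 - mu \<kappa> \<alpha> \<delta> 0 x1\<bar>"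
    have z: "0 \<in> ?S" using ell_ge0[OF e(1)] by simp
    then have ne: "?S \<noteq> {}" by blast
    have bd: "\<And>x. x \<in> ?S \<Longrightarrow> ?f x \<le> 2*(r/3)"
    proof -
      fix x assume "x \<in> ?S"
      then show "?f x \<le> 2*(r/3)" using cl e by simp
    qed
    have le: "(SUP x1\<in>?S. ?f x1) \<le> 2*(r/3)" by (rule cSUP_least[OF ne bd])
    have bda: "bdd_above (?f ` ?S)" by (rule bdd_aboveI2[OF bd])
    have ge: "?f 0 \<le> (SUP x1\<in>?S. ?f x1)" by (rule cSUP_upper[OF z bda])
    have "0 \<le> ?f 0" by simp
    then show ?case using le ge r by (simp add: dist_real_def)
  qed
qed

end

theorem lemma3p1:
  fixes \<kappa> \<alpha> \<delta> :: real
  assumes "\<kappa> > 0" and "\<alpha> > 0" and "\<delta> < 0"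
  shows "((\<lambda>\<epsilon>. SUP x1 \<in> {x1. 0 \<le> x1 \<and> ereal x1 < ell \<kappa> \<alpha> \<delta> \<epsilon>}.
             \<bar>mu \<kappa> \<alpha> \<delta> \<epsilon> x1 - mu \<kappa> \<alpha> \<delta> 0 x1\<bar>) \<longlongrightarrow> 0) (at_right 0)
    \<and> (\<exists>\<epsilon>0 > 0. \<exists>C1 > 0. \<exists>C2 > 0. \<exists>C3 > 0.
         \<forall>\<epsilon> x1. 0 \<le> \<epsilon> \<and> \<epsilon> \<le> \<epsilon>0 \<and> 0 \<le> x1 \<and> ereal x1 < ell \<kappa> \<alpha> \<delta> \<epsilon> \<longrightarrow>
           \<bar>mu \<kappa> \<alpha> \<delta> \<epsilon> x1\<bar> \<le> C1 * (1 + x1) powr (- 1 / \<alpha>) \<and>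
           \<bar>Hfun \<kappa> \<alpha> \<epsilon> (mu \<kappa> \<alpha> \<delta> \<epsilon> x1)\<bar> \<le> C2 * (1 + x1) powr (- 1 - 1 / \<alpha>) \<and>
           \<bar>deriv (Hfun \<kappa> \<alpha> 0) (mu \<kappa> \<alpha> \<delta> \<epsilon> x1)\<bar> \<le> C3 * (1 + x1) powr (- 1))"
proof -
  interpret P \<kappa> \<alpha> \<delta> using assms by unfold_locales
  show ?thesis using part1 part2 by blast
qed

end
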